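(* Let $\varphi$ be an automorphism of $E$ of type 4, let $\{e_n\}_{n\in\mathbb{N}}$ be a basis of $L$, and write $\varphi(e_n)=-e_n+2a_n$ with $a_n=(e_n+\varphi(e_n))/2$. Then the family $\{a_n\mid n\in\mathbb{N}\}$ is linearly independent over $F$.
   Context: $F$ is a field of characteristic zero, $L$ an infinite-dimensional $F$-vector space, $E$ the Grassmann algebra of $L$. An automorphism $\varphi$ of $E$ with $\varphi^2=\mathrm{id}$ is of type 4 if for every basis $\gamma$ of $L$ no element $v\in\gamma$ satisfies $\varphi(v)=\pm v$. *)

theory Defs
  imports Main
begin

text \<open>Concrete model of the Grassmann (exterior) algebra E of an infinite-dimensional
F-vector space L with countable basis indexed by nat.  An element of E is a function
from finite subsets of nat (standard monomials e_{i1} ... e_{ik}, i1 < ... < ik) to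
the field F, with finite support.\<close>

definition Ecar :: "(nat set \<Rightarrow> 'a::zero) set" where
  "Ecar = {f. finite {S. f S \<noteq> 0} \<and> (\<forall>S. f S \<noteq> 0 \<longrightarrow> finite S)}"

definition gsign :: "nat set \<Rightarrow> nat set \<Rightarrow> 'a::comm_ring_1" where
  "gsign S T = (-1) ^ card {(i, j). i \<in> S \<and> j \<in> T \<and> j < i}"

definition gadd :: "(nat set \<Rightarrow> 'a::field) \<Rightarrow> (nat set \<Rightarrow> 'a) \<Rightarrow> nat set \<Rightarrow> 'a" where
  "gadd f g = (\<lambda>S. f S + g S)"

definition gneg :: "(nat set \<Rightarrow> 'a::field) \<Rightarrow> nat set \<Rightarrow> 'a" where
  "gneg f = (\<lambda>S. - f S)"

definition gsmult :: "'a::field \<Rightarrow> (nat set \<Rightarrow> 'a) \<Rightarrow> nat set \<Rightarrow> 'a" where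
  "gsmult c f = (\<lambda>S. c * f S)"

text \<open>Product in the exterior algebra: e_S e_T = sign(S,T) e_{S \<union> T} if S, T disjoint, else 0.\<close>
definition gmult :: "(nat set \<Rightarrow> 'a::field) \<Rightarrow> (nat set \<Rightarrow> 'a) \<Rightarrow> nat set \<Rightarrow> 'a" where
  "gmult f g = (\<lambda>U. if finite U then (\<Sum>S\<in>Pow U. gsign S (U - S) * f S * g (U - S)) else 0)"

definition gone :: "nat set \<Rightarrow> 'a::field" where
  "gone = (\<lambda>S. if S = {} then 1 else 0)"

definition Lspace :: "(nat set \<Rightarrow> 'a::field) set" where
  "Lspace = {f \<in> Ecar. \<forall>S. f S \<noteq> 0 \<longrightarrow> card S = 1}"

definition L_lin_indep :: "(nat set \<Rightarrow> 'a::field) set \<Rightarrow> bool" where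
  "L_lin_indep B \<longleftrightarrow> (\<forall>A c. finite A \<and> A \<subseteq> B \<and> (\<lambda>S. \<Sum>v\<in>A. c v * v S) = (\<lambda>S. 0)
       \<longrightarrow> (\<forall>v\<in>A. c v = 0))"

definition is_L_basis :: "(nat set \<Rightarrow> 'a::field) set \<Rightarrow> bool" where
  "is_L_basis B \<longleftrightarrow> B \<subseteq> Lspace \<and> L_lin_indep B \<and>
     (\<forall>x\<in>Lspace. \<exists>A c. finite A \<and> A \<subseteq> B \<and> x = (\<lambda>S. \<Sum>v\<in>A. c v * v S))"

definition is_L_basis_family :: "(nat \<Rightarrow> nat set \<Rightarrow> 'a::field) \<Rightarrow> bool" where
  "is_L_basis_family e \<longleftrightarrow> inj e \<and> is_L_basis (range e)"

text \<open>F-algebra automorphism of E (values outside the carrier are irrelevant).\<close>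
definition is_E_auto :: "((nat set \<Rightarrow> 'a::field) \<Rightarrow> (nat set \<Rightarrow> 'a)) \<Rightarrow> bool" where
  "is_E_auto \<phi> \<longleftrightarrow> bij_betw \<phi> Ecar Ecar \<and>
     (\<forall>f\<in>Ecar. \<forall>g\<in>Ecar. \<phi> (gadd f g) = gadd (\<phi> f) (\<phi> g)) \<and>
     (\<forall>f\<in>Ecar. \<forall>g\<in>Ecar. \<phi> (gmult f g) = gmult (\<phi> f) (\<phi> g)) \<and>
     (\<forall>c. \<forall>f\<in>Ecar. \<phi> (gsmult c f) = gsmult c (\<phi> f)) \<and>
     \<phi> gone = gone"

definition type4 :: "((nat set \<Rightarrow> 'a::field) \<Rightarrow> (nat set \<Rightarrow> 'a)) \<Rightarrow> bool" where
  "type4 \<phi> \<longleftrightarrow> is_E_auto \<phi> \<and> (\<forall>f\<in>Ecar. \<phi> (\<phi> f) = f) \<and>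
     (\<forall>\<gamma>. is_L_basis \<gamma> \<longrightarrow> (\<forall>v\<in>\<gamma>. \<phi> v \<noteq> v \<and> \<phi> v \<noteq> gneg v))"

end

theory Submission
  imports Defs
begin

lemma lc_Ecar:
  fixes f :: "nat \<Rightarrow> nat set \<Rightarrow> 'a::field"
  assumes "finite N" "\<And>n. n \<in> N \<Longrightarrow> f n \<in> Ecar"
  shows "(\<lambda>S. \<Sum>n\<in>N. c n * f n S) \<in> Ecar"
proof -
  have sub: "{S. (\<Sum>n\<in>N. c n * f n S) \<noteq> 0} \<subseteq> (\<Union>n\<in>N. {S. f n S \<noteq> 0})"
  proof
    fix S assume "S \<in> {S. (\<Sum>n\<in>N. c n * f n S) \<noteq> 0}"
    then obtain n where "n \<in> N" "c n * f n S \<noteq> 0"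
      by (metis (mono_tags, lifting) mem_Collect_eq sum.neutral)
    then show "S \<in> (\<Union>n\<in>N. {S. f n S \<noteq> 0})" by auto
  qed
  have "finite (\<Union>n\<in>N. {S. f n S \<noteq> 0})"
    using assms unfolding Ecar_def by auto
  then have "finite {S. (\<Sum>n\<in>N. c n * f n S) \<noteq> 0}" using sub finite_subset by blast
  moreover have "finite S" if "(\<Sum>n\<in>N. c n * f n S) \<noteq> 0" for S
    using sub that assms unfolding Ecar_def by blast
  ultimately show ?thesis unfolding Ecar_def by auto
qed

lemma lc_Lspace:
  fixes f :: "nat \<Rightarrow> nat set \<Rightarrow> 'a::field"
  assumes "finite N" "\<And>n. n \<in> N \<Longrightarrow> f n \<in> Lspace"
  shows "(\<lambda>S. \<Sum>n\<in>N. c n * f n S) \<in> Lspace"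
proof -
  have "(\<lambda>S. \<Sum>n\<in>N. c n * f n S) \<in> Ecar"
    using assms by (intro lc_Ecar) (auto simp: Lspace_def)
  moreover have "card S = 1" if nz: "(\<Sum>n\<in>N. c n * f n S) \<noteq> 0" for S
  proof -
    obtain n where "n \<in> N" "c n * f n S \<noteq> 0"
      using sum.not_neutral_contains_not_neutral[OF nz] by blast
    then show ?thesis using assms(2)[of n] unfolding Lspace_def by auto
  qed
  ultimately show ?thesis unfolding Lspace_def by auto
qed

lemma auto_zero:
  fixes \<phi> :: "(nat set \<Rightarrow> 'a::field) \<Rightarrow> (nat set \<Rightarrow> 'a)"
  assumes "is_E_auto \<phi>"
  shows "\<phi> (\<lambda>S. 0) = (\<lambda>S. 0)"
proof -
  have z: "(\<lambda>S. 0::'a) \<in> Ecar" unfolding Ecar_def by auto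
  have "gadd (\<lambda>S. 0::'a) (\<lambda>S. 0) = (\<lambda>S. 0)" unfolding gadd_def by simp
  moreover have "\<phi> (gadd (\<lambda>S. 0) (\<lambda>S. 0)) = gadd (\<phi> (\<lambda>S. 0)) (\<phi> (\<lambda>S. 0))"
    using assms z unfolding is_E_auto_def by blast
  ultimately have "\<phi> (\<lambda>S. 0) = gadd (\<phi> (\<lambda>S. 0)) (\<phi> (\<lambda>S. 0))" by simp
  then have "\<And>S. \<phi> (\<lambda>S. 0) S = \<phi> (\<lambda>S. 0) S + \<phi> (\<lambda>S. 0) S"
    unfolding gadd_def by (metis (no_types))
  then have "\<And>S. \<phi> (\<lambda>S. 0) S = 0" by (metis add.right_neutral add_left_cancel)
  then show ?thesis by (simp add: fun_eq_iff)
qed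

lemma auto_lc:
  fixes \<phi> :: "(nat set \<Rightarrow> 'a::field) \<Rightarrow> (nat set \<Rightarrow> 'a)" and f :: "nat \<Rightarrow> nat set \<Rightarrow> 'a"
  assumes "is_E_auto \<phi>" "finite N" "\<And>n. f n \<in> Ecar"
  shows "\<phi> (\<lambda>S. \<Sum>n\<in>N. c n * f n S) = (\<lambda>S. \<Sum>n\<in>N. c n * \<phi> (f n) S)"
  using assms(2)
proof (induction N rule: finite_induct)
  case empty
  then show ?case using auto_zero[OF assms(1)] by simp
next
  case (insert k N)
  have eq: "(\<lambda>S. \<Sum>n\<in>insert k N. c n * f n S) = gadd (gsmult (c k) (f k)) (\<lambda>S. \<Sum>n\<in>N. c n * f n S)"
    using insert by (simp add: gadd_def gsmult_def)
  have m1: "gsmult (c k) (f k) \<in> Ecar"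
  proof -
    have "gsmult (c k) (f k) = (\<lambda>S. \<Sum>n\<in>{k}. c n * f n S)" by (simp add: gsmult_def)
    then show ?thesis using lc_Ecar[where N="{k}" and f=f and c=c] assms(3) by simp
  qed
  have m2: "(\<lambda>S. \<Sum>n\<in>N. c n * f n S) \<in> Ecar" using lc_Ecar insert assms(3) by blast
  have hadd: "\<And>f g. f \<in> Ecar \<Longrightarrow> g \<in> Ecar \<Longrightarrow> \<phi> (gadd f g) = gadd (\<phi> f) (\<phi> g)"
    and hsm: "\<And>c f. f \<in> Ecar \<Longrightarrow> \<phi> (gsmult c f) = gsmult c (\<phi> f)"
    using assms(1) unfolding is_E_auto_def by blast+
  have "\<phi> (\<lambda>S. \<Sum>n\<in>insert k N. c n * f n S) = gadd (\<phi> (gsmult (c k) (f k))) (\<phi> (\<lambda>S. \<Sum>n\<in>N. c n * f n S))"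
    unfolding eq by (rule hadd[OF m1 m2])
  also have "\<dots> = gadd (gsmult (c k) (\<phi> (f k))) (\<lambda>S. \<Sum>n\<in>N. c n * \<phi> (f n) S)"
    using insert.IH hsm[OF assms(3)] by simp
  finally show ?case using insert by (simp add: gadd_def gsmult_def)
qed

lemma idx_indep:
  fixes e :: "nat \<Rightarrow> nat set \<Rightarrow> 'a::field"
  assumes "inj e" "L_lin_indep (range e)" "finite K" "\<And>S. (\<Sum>k\<in>K. b k * e k S) = 0"
  shows "\<forall>k\<in>K. b k = 0"
proof -
  let ?c = "\<lambda>w. b (inv e w)"
  have "(\<lambda>S. \<Sum>w\<in>e ` K. ?c w * w S) = (\<lambda>S. \<Sum>k\<in>K. b k * e k S)"
  proof
    fix S
    have "(\<Sum>w\<in>e ` K. ?c w * w S) = (\<Sum>k\<in>K. ?c (e k) * e k S)"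
      using assms(1) by (subst sum.reindex) (auto intro: inj_on_subset)
    then show "(\<Sum>w\<in>e ` K. ?c w * w S) = (\<Sum>k\<in>K. b k * e k S)"
      using assms(1) by simp
  qed
  also have "\<dots> = (\<lambda>S. 0)" using assms(4) by simp
  finally have z: "(\<lambda>S. \<Sum>w\<in>e ` K. ?c w * w S) = (\<lambda>S. 0)" .
  have li: "\<And>A c. finite A \<Longrightarrow> A \<subseteq> range e \<Longrightarrow> (\<lambda>S. \<Sum>v\<in>A. c v * v S) = (\<lambda>S. 0) \<Longrightarrow> (\<forall>v\<in>A. c v = 0)"
    using assms(2) unfolding L_lin_indep_def by blast
  have "\<forall>w\<in>e ` K. ?c w = 0"
    by (rule li[OF finite_imageI[OF assms(3)] _ z]) auto
  then show ?thesis using assms(1) by simp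
qed

lemma if_mult0: "(if P then a else 0) * y = (if P then a * y else (0::'a::mult_zero))"
  by simp

lemma sum_if_sub:
  assumes "finite B" "M \<subseteq> B"
  shows "(\<Sum>k\<in>B. if k \<in> M then g k else 0) = (\<Sum>k\<in>M. (g k :: 'b::comm_monoid_add))"
proof -
  have "(\<Sum>k\<in>B. if k \<in> M then g k else 0) = sum g (B \<inter> M)"
    using sum.inter_restrict[OF assms(1), of g M] by simp
  also have "B \<inter> M = M" using assms(2) by blast
  finally show ?thesis .
qed

theorem mainTheorem12:
  fixes \<phi> :: "(nat set \<Rightarrow> 'a::field_char_0) \<Rightarrow> (nat set \<Rightarrow> 'a)"
    and e :: "nat \<Rightarrow> nat set \<Rightarrow> 'a"
    and a :: "nat \<Rightarrow> nat set \<Rightarrow> 'a"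
  assumes "type4 \<phi>"
    and "is_L_basis_family e"
    and "\<And>n. a n = gsmult (1/2) (gadd (e n) (\<phi> (e n)))"
  shows "\<forall>N c. finite N \<and> (\<lambda>S. \<Sum>n\<in>N. c n * a n S) = (\<lambda>S. 0) \<longrightarrow> (\<forall>n\<in>N. c n = 0)"
proof (intro allI impI)
  fix N c assume H: "finite N \<and> (\<lambda>S. \<Sum>n\<in>N. c n * a n S) = (\<lambda>S. 0)"
  then have fN: "finite N" and H0: "\<And>S. (\<Sum>n\<in>N. c n * a n S) = 0" by (auto simp: fun_eq_iff)
  show "\<forall>n\<in>N. c n = 0"
  proof (rule ccontr)
    assume "\<not> (\<forall>n\<in>N. c n = 0)"
    then obtain m where mN: "m \<in> N" and cm: "c m \<noteq> 0" by blast
    have auto: "is_E_auto \<phi>" and t4: "\<And>\<gamma> v. is_L_basis \<gamma> \<Longrightarrow> v \<in> \<gamma> \<Longrightarrow> \<phi> v \<noteq> gneg v"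
      using assms(1) unfolding type4_def by blast+
    have inje: "inj e" and sub: "range e \<subseteq> Lspace" and li: "L_lin_indep (range e)"
      and sp: "\<And>x. x \<in> Lspace \<Longrightarrow> \<exists>A c. finite A \<and> A \<subseteq> range e \<and> x = (\<lambda>S. \<Sum>v\<in>A. c v * v S)"
      using assms(2) unfolding is_L_basis_family_def is_L_basis_def by blast+
    have eL: "\<And>n. e n \<in> Lspace" using sub by blast
    then have eE: "\<And>n. e n \<in> Ecar" unfolding Lspace_def by blast
    define v where "v = (\<lambda>S. \<Sum>n\<in>N. c n * e n S)"
    have vL: "v \<in> Lspace" unfolding v_def using fN eL by (rule lc_Lspace)
    have phiv: "\<phi> v = (\<lambda>S. \<Sum>n\<in>N. c n * \<phi> (e n) S)"
      unfolding v_def using auto fN eE by (rule auto_lc)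
    have sumz: "(\<Sum>n\<in>N. c n * e n S) + (\<Sum>n\<in>N. c n * \<phi> (e n) S) = 0" for S
    proof -
      have "(\<Sum>n\<in>N. c n * a n S) = (1/2) * ((\<Sum>n\<in>N. c n * e n S) + (\<Sum>n\<in>N. c n * \<phi> (e n) S))"
        unfolding assms(3) gsmult_def gadd_def
        by (simp add: sum_distrib_left sum.distrib[symmetric] algebra_simps)
      then show ?thesis using H0[of S] by simp
    qed
    have "\<phi> v S = - v S" for S
    proof -
      have "\<phi> v S = (\<Sum>n\<in>N. c n * \<phi> (e n) S)" using phiv by simp
      also have "\<dots> = - v S" using sumz[of S] unfolding v_def
        by (simp add: eq_neg_iff_add_eq_0 add.commute)
      finally show ?thesis .
    qed
    then have phineg: "\<phi> v = gneg v" unfolding gneg_def by (simp add: fun_eq_iff)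
    define \<gamma> where "\<gamma> = insert v (e ` (UNIV - {m}))"
    have basis: "is_L_basis \<gamma>"
      unfolding is_L_basis_def
    proof (intro conjI)
      show "\<gamma> \<subseteq> Lspace" unfolding \<gamma>_def using vL eL by blast
    next
      show "L_lin_indep \<gamma>" unfolding L_lin_indep_def
      proof (intro allI impI)
        fix A d assume HA: "finite A \<and> A \<subseteq> \<gamma> \<and> (\<lambda>S. \<Sum>u\<in>A. d u * u S) = (\<lambda>S. 0)"
        then have fA: "finite A" and Asub: "A \<subseteq> \<gamma>" and ZA: "\<And>S. (\<Sum>u\<in>A. d u * u S) = 0"
          by (auto simp: fun_eq_iff)
        define M where "M = e -` (A - {v})"
        have fM: "finite M" unfolding M_def using fA inje by (intro finite_vimageI) auto
        have mM: "m \<notin> M"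
        proof
          assume "m \<in> M"
          then have "e m \<in> e ` (UNIV - {m})" unfolding M_def using Asub \<gamma>_def by auto
          then show False using inje by (auto dest: injD)
        qed
        have AM: "A - {v} = e ` M" unfolding M_def using Asub \<gamma>_def by auto
        define \<delta> where "\<delta> = (if v \<in> A then d v else 0)"
        have dec: "(\<Sum>u\<in>A. d u * u S) = \<delta> * v S + (\<Sum>k\<in>M. d (e k) * e k S)" for S
        proof -
          have "(\<Sum>u\<in>A. d u * u S) = \<delta> * v S + (\<Sum>u\<in>A - {v}. d u * u S)"
          proof (cases "v \<in> A")
            case True
            then show ?thesis unfolding \<delta>_def using sum.remove[OF fA True] by simp
          next
            case False
            then show ?thesis unfolding \<delta>_def by simp
          qed
          also have "(\<Sum>u\<in>A - {v}. d u * u S) = (\<Sum>k\<in>M. d (e k) * e k S)"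
            unfolding AM using inje by (subst sum.reindex) (auto intro: inj_on_subset)
          finally show ?thesis .
        qed
        define f where "f k = (if k \<in> M then d (e k) else 0) + \<delta> * (if k \<in> N then c k else 0)" for k
        have fz: "(\<Sum>k\<in>M \<union> N. f k * e k S) = 0" for S
        proof -
          have "(\<Sum>k\<in>M \<union> N. f k * e k S) = (\<Sum>k\<in>M \<union> N. (if k \<in> M then d (e k) * e k S else 0))
                 + \<delta> * (\<Sum>k\<in>M \<union> N. (if k \<in> N then c k * e k S else 0))"
          proof -
            have "f k * e k S = (if k \<in> M then d (e k) * e k S else 0) + \<delta> * (if k \<in> N then c k * e k S else 0)" for k
              by (auto simp: f_def algebra_simps)
            then show ?thesis by (simp add: sum.distrib sum_distrib_left)
          qed
          also have "\<dots> = (\<Sum>k\<in>M. d (e k) * e k S) + \<delta> * v S"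
            unfolding v_def using fM fN by (simp add: sum_if_sub)
          finally show ?thesis using dec[of S] ZA[of S] by (simp add: add.commute)
        qed
        have f0: "\<forall>k\<in>M \<union> N. f k = 0"
          using idx_indep[OF inje li _ fz] fM fN by blast
        have "f m = \<delta> * c m" unfolding f_def using mM mN by simp
        then have d0: "\<delta> = 0" using f0 mN cm by simp
        show "\<forall>u\<in>A. d u = 0"
        proof
          fix u assume uA: "u \<in> A"
          show "d u = 0"
          proof (cases "u = v")
            case True
            then show ?thesis using d0 uA unfolding \<delta>_def by simp
          next
            case False
            then have "u \<in> e ` M" using uA AM by blast
            then obtain k where "k \<in> M" "u = e k" by blast
            then show ?thesis using f0 d0 unfolding f_def by force
          qed
        qed
      qed
    next
      show "\<forall>x\<in>Lspace. \<exists>A c. finite A \<and> A \<subseteq> \<gamma> \<and> x = (\<lambda>S. \<Sum>v\<in>A. c v * v S)"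
      proof
        fix x :: "nat set \<Rightarrow> 'a" assume "x \<in> Lspace"
        then obtain A c' where fA: "finite A" and Ae: "A \<subseteq> range e" and xA: "x = (\<lambda>S. \<Sum>w\<in>A. c' w * w S)"
          using sp by blast
        define K where "K = e -` A"
        have fK: "finite K" unfolding K_def using fA inje by (intro finite_vimageI) auto
        have AK: "A = e ` K" unfolding K_def using Ae by auto
        define b where "b k = (if k \<in> K then c' (e k) else 0)" for k
        define J where "J = K \<union> N"
        have fJ: "finite J" unfolding J_def using fK fN by simp
        have xJ: "x S = (\<Sum>k\<in>J. b k * e k S)" for S
        proof -
          have "x S = (\<Sum>k\<in>K. c' (e k) * e k S)"
            unfolding xA AK using inje by (subst sum.reindex) (auto intro: inj_on_subset)
          also have "\<dots> = (\<Sum>k\<in>J. b k * e k S)"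
            unfolding b_def J_def using fK fN
            using sum_if_sub[of J K "\<lambda>k. c' (e k) * e k S"] fJ by (simp add: J_def if_mult0)
          finally show ?thesis .
        qed
        define c0 where "c0 k = (if k \<in> N then c k else 0)" for k
        have vJ: "v S = (\<Sum>k\<in>J. c0 k * e k S)" for S
          unfolding v_def c0_def J_def using fK fN
          using sum_if_sub[of J N "\<lambda>k. c k * e k S"] fJ by (simp add: J_def if_mult0)
        define \<alpha> where "\<alpha> = b m / c m"
        define \<beta> where "\<beta> k = b k - \<alpha> * c0 k" for k
        define J' where "J' = J - {m}"
        have mJ: "m \<in> J" unfolding J_def using mN by simp
        have bm: "\<beta> m = 0" unfolding \<beta>_def \<alpha>_def c0_def using mN cm by simp
        have xJ': "x S = \<alpha> * v S + (\<Sum>k\<in>J'. \<beta> k * e k S)" for S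
        proof -
          have "(\<Sum>k\<in>J'. \<beta> k * e k S) = (\<Sum>k\<in>J. \<beta> k * e k S)"
            unfolding J'_def using sum.remove[OF fJ mJ, of "\<lambda>k. \<beta> k * e k S"] bm by simp
          also have "\<dots> = x S - \<alpha> * v S"
            unfolding xJ vJ \<beta>_def by (simp add: sum_subtractf sum_distrib_left algebra_simps)
          finally show ?thesis by simp
        qed
        define A' where "A' = insert v (e ` J')"
        define g where "g w = (if w = v then \<alpha> else 0) + (if w \<in> e ` J' then \<beta> (inv e w) else 0)" for w
        have fA': "finite A'" unfolding A'_def J'_def using fJ by simp
        have A'g: "A' \<subseteq> \<gamma>" unfolding A'_def \<gamma>_def J'_def by auto
        have "x = (\<lambda>S. \<Sum>w\<in>A'. g w * w S)"
        proof
          fix S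
          have "(\<Sum>w\<in>A'. g w * w S) = (\<Sum>w\<in>A'. (if w = v then \<alpha> * w S else 0))
                + (\<Sum>w\<in>A'. (if w \<in> e ` J' then \<beta> (inv e w) * w S else 0))"
            unfolding g_def sum.distrib[symmetric] by (rule sum.cong) (auto simp: algebra_simps)
          also have "(\<Sum>w\<in>A'. (if w = v then \<alpha> * w S else 0)) = \<alpha> * v S"
            using fA' unfolding A'_def by (simp add: sum.delta)
          also have "(\<Sum>w\<in>A'. (if w \<in> e ` J' then \<beta> (inv e w) * w S else 0))
                = (\<Sum>w\<in>e ` J'. \<beta> (inv e w) * w S)"
            using fA' sum_if_sub[of A' "e ` J'" "\<lambda>w. \<beta> (inv e w) * w S"] unfolding A'_def by auto
          also have "\<dots> = (\<Sum>k\<in>J'. \<beta> k * e k S)"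
            using inje by (subst sum.reindex) (auto intro: inj_on_subset)
          finally show "x S = (\<Sum>w\<in>A'. g w * w S)" using xJ'[of S] by simp
        qed
        then show "\<exists>A c. finite A \<and> A \<subseteq> \<gamma> \<and> x = (\<lambda>S. \<Sum>v\<in>A. c v * v S)"
          using fA' A'g by blast
      qed
    qed
    have "\<phi> v \<noteq> gneg v" using t4[OF basis] unfolding \<gamma>_def by blast
    then show False using phineg by blast
  qed
qed

end
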